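(* Let $\ell \geq 3$ be an integer. Let $A=(a_{ij})_{1\le i\le \ell,\,1\le j\le 2}$ and $B=(b_{ij})_{1\le i\le \ell,\,1\le j\le 2}$ be $\ell\times 2$ real matrices all of whose entries are non-zero, with $\operatorname{rank} A = \operatorname{rank} B = 2$. Then there exist proper algebraic subsets $\Sigma_A, \Sigma_B \subset (\mathbb{R}^2)^\ell$ such that for every $p\in (\mathbb{R}^2)^\ell\setminus \Sigma_A$ and every $q\in(\mathbb{R}^2)^\ell\setminus\Sigma_B$, the mapping $G_{(p,A)}$ is $\mathcal{A}$-equivalent to the mapping $G_{(q,B)}$.
   Context: For a point $p=(p_1,\dots,p_\ell)\in(\mathbb{R}^2)^\ell$ with $p_i=(p_{i1},p_{i2})$ and an $\ell\times 2$ matrix $A=(a_{ij})$ with non-zero entries, the generalized distance-squared mapping $G_{(p,A)}:\mathbb{R}^2\to\mathbb{R}^\ell$ is $G_{(p,A)}(x_1,x_2)=\big(\sum_{j=1}^2 a_{1j}(x_j-p_{1j})^2,\ \dots,\ \sum_{j=1}^2 a_{\ell j}(x_j-p_{\ell j})^2\big)$. Two smooth maps $f,g:\mathbb{R}^2\to\mathbb{R}^\ell$ are $\mathcal{A}$-equivalent if there are ($C^\infty$) diffeomorphisms $h:\mathbb{R}^2\to\mathbb{R}^2$ and $H:\mathbb{R}^\ell\to\mathbb{R}^\ell$ with $f=H\circ g\circ h^{-1}$. *)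

theory Defs
  imports "HOL-Analysis.Analysis"
begin

fun smooth_k :: "nat \<Rightarrow> ('a::euclidean_space \<Rightarrow> 'b::euclidean_space) \<Rightarrow> bool" where
  "smooth_k 0 f = continuous_on UNIV f"
| "smooth_k (Suc k) f =
     ((\<forall>x. f differentiable (at x)) \<and>
      (\<forall>v. smooth_k k (\<lambda>x. frechet_derivative f (at x) v)))"

definition smooth :: "('a::euclidean_space \<Rightarrow> 'b::euclidean_space) \<Rightarrow> bool" where
  "smooth f \<longleftrightarrow> (\<forall>k. smooth_k k f)"

definition diffeomorphism :: "('a::euclidean_space \<Rightarrow> 'a) \<Rightarrow> bool" where
  "diffeomorphism h \<longleftrightarrow> bij h \<and> smooth h \<and> smooth (inv h)"

definition A_equivalent ::
  "('a::euclidean_space \<Rightarrow> 'b::euclidean_space) \<Rightarrow> ('a \<Rightarrow> 'b) \<Rightarrow> bool" where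
  "A_equivalent f g \<longleftrightarrow>
     (\<exists>h H. diffeomorphism h \<and> diffeomorphism H \<and> f = H \<circ> g \<circ> inv h)"

inductive_set poly_funs :: "('a::euclidean_space \<Rightarrow> real) set" where
  const: "(\<lambda>x. c) \<in> poly_funs"
| coord: "b \<in> Basis \<Longrightarrow> (\<lambda>x. x \<bullet> b) \<in> poly_funs"
| add: "f \<in> poly_funs \<Longrightarrow> g \<in> poly_funs \<Longrightarrow> (\<lambda>x. f x + g x) \<in> poly_funs"
| mult: "f \<in> poly_funs \<Longrightarrow> g \<in> poly_funs \<Longrightarrow> (\<lambda>x. f x * g x) \<in> poly_funs"

definition algebraic_set :: "'a::euclidean_space set \<Rightarrow> bool" where
  "algebraic_set S \<longleftrightarrow>
     (\<exists>F. finite F \<and> F \<subseteq> poly_funs \<and> S = {x. \<forall>f\<in>F. f x = 0})"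

definition proper_algebraic_set :: "'a::euclidean_space set \<Rightarrow> bool" where
  "proper_algebraic_set S \<longleftrightarrow> algebraic_set S \<and> S \<noteq> UNIV"

definition G :: "real^2^'l \<Rightarrow> real^2^'l \<Rightarrow> real^2 \<Rightarrow> real^'l" where
  "G p A x = (\<chi> i. \<Sum>j\<in>UNIV. A$i$j * (x$j - p$i$j)^2)"

end

theory Submission
  imports Defs
begin

lemma pf_coord_cart: "(\<lambda>x::real^'n. x$i) \<in> poly_funs"
proof -
  have "(\<lambda>x::real^'n. x \<bullet> axis i 1) \<in> poly_funs" by (rule poly_funs.coord) simp
  then show ?thesis by (simp add: inner_axis)
qed

lemma pf_coord_cart2: "(\<lambda>x::real^'m^'n. x$i$j) \<in> poly_funs"
proof -
  have "(\<lambda>x::real^'m^'n. x \<bullet> axis i (axis j 1)) \<in> poly_funs" by (rule poly_funs.coord) simp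
  then show ?thesis by (simp add: inner_axis)
qed

lemma pf_minus: "f \<in> poly_funs \<Longrightarrow> g \<in> poly_funs \<Longrightarrow> (\<lambda>x. f x - g x) \<in> poly_funs"
proof -
  assume a: "f \<in> poly_funs" "g \<in> poly_funs"
  have "(\<lambda>x. f x + (-1) * g x) \<in> poly_funs"
    by (intro poly_funs.add poly_funs.mult a poly_funs.const)
  then show ?thesis by simp
qed

lemma pf_pow2: "f \<in> poly_funs \<Longrightarrow> (\<lambda>x. (f x)^2) \<in> poly_funs"
  using poly_funs.mult[of f f] by (simp add: power2_eq_square)

lemma pf_div: "f \<in> poly_funs \<Longrightarrow> (\<lambda>x. f x / c) \<in> poly_funs"
  using poly_funs.mult[OF _ poly_funs.const, of f "1/c"] by simp

lemma pf_uminus: "f \<in> poly_funs \<Longrightarrow> (\<lambda>x. - f x) \<in> poly_funs"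
  using pf_minus[OF poly_funs.const, of f 0] by simp

lemma pf_sum: "finite S \<Longrightarrow> (\<And>i. i \<in> S \<Longrightarrow> f i \<in> poly_funs) \<Longrightarrow> (\<lambda>x. \<Sum>i\<in>S. f i x) \<in> poly_funs"
proof (induction S rule: finite_induct)
  case empty then show ?case using poly_funs.const[of 0] by simp
next
  case (insert a S) then show ?case using poly_funs.add[of "f a" "\<lambda>x. \<Sum>i\<in>S. f i x"] by simp
qed

lemmas pf_intros = poly_funs.const pf_coord_cart pf_coord_cart2 poly_funs.add poly_funs.mult pf_minus pf_pow2 pf_div pf_uminus

lemma pf_deriv:
  fixes g :: "'a::euclidean_space \<Rightarrow> real"
  assumes "g \<in> poly_funs"
  shows "\<exists>g'. (\<forall>x. (g has_derivative g' x) (at x)) \<and> (\<forall>v. (\<lambda>x. g' x v) \<in> poly_funs)"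
  using assms
proof induction
  case (const c)
  show ?case by (rule exI[of _ "\<lambda>x v. 0"]) (auto intro: poly_funs.const)
next
  case (coord b)
  show ?case by (rule exI[of _ "\<lambda>x v. v \<bullet> b"]) (auto intro: poly_funs.const derivative_eq_intros)
next
  case (add f g)
  then obtain f' g' where f: "\<forall>x. (f has_derivative f' x) (at x)" "\<forall>v. (\<lambda>x. f' x v) \<in> poly_funs"
    and g: "\<forall>x. (g has_derivative g' x) (at x)" "\<forall>v. (\<lambda>x. g' x v) \<in> poly_funs" by blast
  show ?case
    by (rule exI[of _ "\<lambda>x v. f' x v + g' x v"]) (use f g in \<open>auto intro: poly_funs.add has_derivative_add\<close>)
next
  case (mult f g)
  then obtain f' g' where f: "\<forall>x. (f has_derivative f' x) (at x)" "\<forall>v. (\<lambda>x. f' x v) \<in> poly_funs"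
    and g: "\<forall>x. (g has_derivative g' x) (at x)" "\<forall>v. (\<lambda>x. g' x v) \<in> poly_funs" by blast
  show ?case
    by (rule exI[of _ "\<lambda>x v. f x * g' x v + f' x v * g x"])
       (use f g mult.hyps poly_funs.add[OF poly_funs.mult[OF mult.hyps(1) g(2)[rule_format]] poly_funs.mult[OF f(2)[rule_format] mult.hyps(2)]] in \<open>auto intro: has_derivative_mult\<close>)
qed

lemma pf_compose:
  fixes g :: "'b::euclidean_space \<Rightarrow> real" and h :: "'a::euclidean_space \<Rightarrow> 'b"
  assumes "g \<in> poly_funs" "\<forall>b\<in>Basis. (\<lambda>x. h x \<bullet> b) \<in> poly_funs"
  shows "(\<lambda>x. g (h x)) \<in> poly_funs"
  using assms(1)
proof induction
  case (const c) then show ?case by (rule poly_funs.const)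
next
  case (coord b) then show ?case using assms(2) by auto
next
  case (add f g) then show ?case using poly_funs.add[of "\<lambda>x. f (h x)" "\<lambda>x. g (h x)"] by simp
next
  case (mult f g) then show ?case using poly_funs.mult[of "\<lambda>x. f (h x)" "\<lambda>x. g (h x)"] by simp
qed

definition poly_map :: "('a::euclidean_space \<Rightarrow> 'b::euclidean_space) \<Rightarrow> bool" where
  "poly_map f \<longleftrightarrow> (\<forall>b\<in>Basis. (\<lambda>x. f x \<bullet> b) \<in> poly_funs)"

lemma poly_map_cart: "poly_map (f :: 'a::euclidean_space \<Rightarrow> real^'n) \<longleftrightarrow> (\<forall>i. (\<lambda>x. f x $ i) \<in> poly_funs)"
  unfolding poly_map_def
proof safe
  fix i assume "\<forall>b\<in>Basis. (\<lambda>x. f x \<bullet> b) \<in> poly_funs"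
  then have "(\<lambda>x. f x \<bullet> axis i 1) \<in> poly_funs" by simp
  then show "(\<lambda>x. f x $ i) \<in> poly_funs" by (simp add: inner_axis)
next
  fix b :: "real^'n" assume "\<forall>i. (\<lambda>x. f x $ i) \<in> poly_funs" "b \<in> Basis"
  moreover obtain i where "b = axis i 1" using \<open>b \<in> Basis\<close> by (auto simp: Basis_vec_def)
  ultimately show "(\<lambda>x. f x \<bullet> b) \<in> poly_funs"
    by (simp add: inner_axis)
qed

lemma poly_map_comp: "poly_map g \<Longrightarrow> poly_map h \<Longrightarrow> poly_map (\<lambda>x. g (h x))"
  unfolding poly_map_def using pf_compose by blast

lemma poly_map_id: "poly_map (\<lambda>x. x)"
  unfolding poly_map_def by (auto intro: poly_funs.coord)

lemma poly_map_deriv: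
  fixes f :: "'a::euclidean_space \<Rightarrow> 'b::euclidean_space"
  assumes "poly_map f"
  shows "\<exists>f'. (\<forall>x. (f has_derivative f' x) (at x)) \<and> (\<forall>v. poly_map (\<lambda>x. f' x v))"
proof -
  have "\<forall>b\<in>Basis. \<exists>g'. (\<forall>x. ((\<lambda>x. f x \<bullet> b) has_derivative g' x) (at x)) \<and> (\<forall>v. (\<lambda>x. g' x v) \<in> poly_funs)"
    using assms pf_deriv unfolding poly_map_def by blast
  then obtain D where D: "\<And>b. b\<in>Basis \<Longrightarrow> (\<forall>x. ((\<lambda>x. f x \<bullet> b) has_derivative D b x) (at x)) \<and> (\<forall>v. (\<lambda>x. D b x v) \<in> poly_funs)"
    by metis
  define f' where "f' x v = (\<Sum>b\<in>Basis. D b x v *\<^sub>R b)" for x v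
  have fe: "f = (\<lambda>x. \<Sum>b\<in>Basis. (f x \<bullet> b) *\<^sub>R b)" by (simp add: euclidean_representation)
  have "(f has_derivative f' x) (at x)" for x
  proof -
    have "((\<lambda>x. \<Sum>b\<in>Basis. (f x \<bullet> b) *\<^sub>R b) has_derivative (\<lambda>v. \<Sum>b\<in>Basis. D b x v *\<^sub>R b)) (at x)"
    proof (rule has_derivative_sum)
      fix b :: 'b assume "b \<in> Basis"
      then have "((\<lambda>x. f x \<bullet> b) has_derivative D b x) (at x)" using D by blast
      from has_derivative_scaleR[OF this has_derivative_const[of b]]
      show "((\<lambda>x. (f x \<bullet> b) *\<^sub>R b) has_derivative (\<lambda>v. D b x v *\<^sub>R b)) (at x)" by simp
    qed
    then show ?thesis using fe unfolding f'_def by metis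
  qed
  moreover have "poly_map (\<lambda>x. f' x v)" for v
  proof -
    have "f' x v \<bullet> b' = D b' x v" if "b' \<in> Basis" for x b'
      using that by (simp add: f'_def inner_sum_left inner_Basis if_distrib cong: if_cong)
    then show ?thesis unfolding poly_map_def using D by simp
  qed
  ultimately show ?thesis by blast
qed

lemma poly_map_smooth_k: "poly_map f \<Longrightarrow> smooth_k k f"
proof (induction k arbitrary: f)
  case 0
  then obtain f' where "\<forall>x. (f has_derivative f' x) (at x)" using poly_map_deriv by blast
  then have "f differentiable_on UNIV" unfolding differentiable_on_def differentiable_def by blast
  then show ?case by (simp add: differentiable_imp_continuous_on)
next
  case (Suc k)
  then obtain f' where f': "\<forall>x. (f has_derivative f' x) (at x)" "\<forall>v. poly_map (\<lambda>x. f' x v)"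
    using poly_map_deriv by blast
  have fd: "frechet_derivative f (at x) = f' x" for x using f' frechet_derivative_at by metis
  show ?case using f' Suc.IH by (auto simp: fd differentiable_def)
qed

lemma poly_map_smooth: "poly_map f \<Longrightarrow> smooth f"
  unfolding smooth_def using poly_map_smooth_k by blast

definition polydiffeo :: "('a::euclidean_space \<Rightarrow> 'a) \<Rightarrow> bool" where
  "polydiffeo h \<longleftrightarrow> poly_map h \<and> (\<exists>g. poly_map g \<and> (\<forall>x. g (h x) = x) \<and> (\<forall>y. h (g y) = y))"

lemma polydiffeoI: "poly_map h \<Longrightarrow> poly_map g \<Longrightarrow> (\<And>x. g (h x) = x) \<Longrightarrow> (\<And>y. h (g y) = y) \<Longrightarrow> polydiffeo h"
  unfolding polydiffeo_def by blast

lemma polydiffeo_diffeo: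
  assumes "poly_map h" "poly_map g" "\<And>x. g (h x) = x" "\<And>y. h (g y) = y"
  shows "diffeomorphism h" "inv h = g"
proof -
  have ij: "inj h" by (rule injI) (metis assms(3))
  have ig: "inv h = g"
  proof
    fix y show "inv h y = g y" using inv_f_f[OF ij, of "g y"] assms(4)[of y] by simp
  qed
  then show "inv h = g" .
  have "bij h" by (rule bij_betw_byWitness[of UNIV g]) (use assms in auto)
  then show "diffeomorphism h" unfolding diffeomorphism_def ig using assms poly_map_smooth by blast
qed

definition peq :: "('a::euclidean_space \<Rightarrow> 'b::euclidean_space) \<Rightarrow> ('a \<Rightarrow> 'b) \<Rightarrow> bool" where
  "peq f g \<longleftrightarrow> (\<exists>h H. polydiffeo h \<and> polydiffeo H \<and> (\<forall>x. f x = H (g (h x))))"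

lemma polydiffeo_id: "polydiffeo (\<lambda>x. x)"
  by (rule polydiffeoI[OF poly_map_id poly_map_id]) auto

lemma polydiffeo_comp: assumes "polydiffeo f" "polydiffeo g" shows "polydiffeo (\<lambda>x. f (g x))"
proof -
  obtain f' where f: "poly_map f" "poly_map f'" "\<forall>x. f' (f x) = x" "\<forall>y. f (f' y) = y"
    using assms(1) unfolding polydiffeo_def by blast
  obtain g' where g: "poly_map g" "poly_map g'" "\<forall>x. g' (g x) = x" "\<forall>y. g (g' y) = y"
    using assms(2) unfolding polydiffeo_def by blast
  show ?thesis
    by (rule polydiffeoI[where g="\<lambda>y. g' (f' y)"]) (use f g poly_map_comp in auto)
qed

lemma polydiffeo_inv: assumes "polydiffeo f" shows "\<exists>g. polydiffeo g \<and> (\<forall>x. g (f x) = x) \<and> (\<forall>y. f (g y) = y)"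
proof -
  obtain f' where f: "poly_map f" "poly_map f'" "\<forall>x. f' (f x) = x" "\<forall>y. f (f' y) = y"
    using assms(1) unfolding polydiffeo_def by blast
  have "polydiffeo f'" by (rule polydiffeoI[where g=f]) (use f in auto)
  then show ?thesis using f by blast
qed

lemma peq_refl: "peq f f"
  unfolding peq_def by (rule exI[of _ "\<lambda>x. x"], rule exI[of _ "\<lambda>x. x"]) (simp add: polydiffeo_id)

lemma peq_sym: assumes "peq f g" shows "peq g f"
proof -
  obtain h H where h: "polydiffeo h" "polydiffeo H" "\<forall>x. f x = H (g (h x))" using assms peq_def by blast
  obtain h' where h': "polydiffeo h'" "\<forall>x. h' (h x) = x" "\<forall>y. h (h' y) = y" using polydiffeo_inv[OF h(1)] by blast
  obtain H' where H': "polydiffeo H'" "\<forall>x. H' (H x) = x" "\<forall>y. H (H' y) = y" using polydiffeo_inv[OF h(2)] by blast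
  have "\<forall>x. g x = H' (f (h' x))"
  proof
    fix x have "f (h' x) = H (g (h (h' x)))" using h(3) by blast
    then show "g x = H' (f (h' x))" using h'(3) H'(2) by simp
  qed
  then show ?thesis unfolding peq_def using h' H' by blast
qed

lemma peq_trans: assumes "peq f g" "peq g k" shows "peq f k"
proof -
  obtain h H where h: "polydiffeo h" "polydiffeo H" "\<forall>x. f x = H (g (h x))" using assms peq_def by blast
  obtain h' H' where h': "polydiffeo h'" "polydiffeo H'" "\<forall>x. g x = H' (k (h' x))" using assms peq_def by blast
  have "\<forall>x. f x = H (H' (k (h' (h x))))"
  proof
    fix x
    have "f x = H (g (h x))" using h(3) by blast
    also have "g (h x) = H' (k (h' (h x)))" using h'(3) by blast
    finally show "f x = H (H' (k (h' (h x))))" .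
  qed
  moreover have "polydiffeo (\<lambda>x. h' (h x))" "polydiffeo (\<lambda>x. H (H' x))"
    using h h' polydiffeo_comp by blast+
  ultimately show ?thesis unfolding peq_def by blast
qed

lemma peq_A_equivalent: assumes "peq f g" shows "A_equivalent f g"
proof -
  obtain h H where h: "polydiffeo h" "polydiffeo H" "\<forall>x. f x = H (g (h x))" using assms peq_def by blast
  obtain h' where h': "poly_map h'" "\<forall>x. h' (h x) = x" "\<forall>y. h (h' y) = y"
    using h(1) unfolding polydiffeo_def by blast
  obtain H' where H': "poly_map H'" "\<forall>x. H' (H x) = x" "\<forall>y. H (H' y) = y"
    using h(2) unfolding polydiffeo_def by blast
  have ph: "poly_map h" "poly_map H" using h(1,2) unfolding polydiffeo_def by blast+
  have d1: "diffeomorphism h'" "inv h' = h"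
    using polydiffeo_diffeo[of h' h] h'(1) ph(1) h'(2,3) by blast+
  have d2: "diffeomorphism H"
    using polydiffeo_diffeo[of H H'] H'(1) ph(2) H'(2,3) by blast
  have "f = H \<circ> g \<circ> inv h'" unfolding d1(2) using h(3) by (simp add: fun_eq_iff)
  then show ?thesis unfolding A_equivalent_def using d1 d2 by blast
qed

lemma peq_left: "polydiffeo H \<Longrightarrow> peq (\<lambda>x. H (f x)) f"
  unfolding peq_def by (rule exI[of _ "\<lambda>x. x"], rule exI[of _ H]) (simp add: polydiffeo_id)

lemma peq_right: "polydiffeo h \<Longrightarrow> peq (\<lambda>x. f (h x)) f"
  unfolding peq_def by (rule exI[of _ h], rule exI[of _ "\<lambda>x. x"]) (simp add: polydiffeo_id)

lemma pf_if: "f \<in> poly_funs \<Longrightarrow> g \<in> poly_funs \<Longrightarrow> (\<lambda>x. if P then f x else g x) \<in> poly_funs"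
  by (cases P) auto

lemmas pf_intros2 = pf_if pf_intros

lemma peq_by_left: "polydiffeo H \<Longrightarrow> (\<And>x. H (f x) = g x) \<Longrightarrow> peq f g"
proof -
  assume a: "polydiffeo H" "\<And>x. H (f x) = g x"
  have "(\<lambda>x. H (f x)) = g" using a(2) by (rule ext)
  then show "peq f g" using peq_left[OF a(1), of f] peq_sym by simp
qed

lemma peq_by_right: "polydiffeo h \<Longrightarrow> (\<And>x. f (h x) = g x) \<Longrightarrow> peq f g"
proof -
  assume a: "polydiffeo h" "\<And>x. f (h x) = g x"
  have "(\<lambda>x. f (h x)) = g" using a(2) by (rule ext)
  then show "peq f g" using peq_right[OF a(1), of f] peq_sym by simp
qed

lemma polydiffeo_shear:
  fixes \<phi> :: "real^'n \<Rightarrow> real^'n"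
  assumes pm: "poly_map \<phi>" and z: "\<And>y j. j \<notin> S \<Longrightarrow> \<phi> y $ j = 0"
    and dep: "\<And>y y'. (\<And>j. j \<notin> S \<Longrightarrow> y$j = y'$j) \<Longrightarrow> \<phi> y = \<phi> y'"
  shows "polydiffeo (\<lambda>y. y + \<phi> y)"
proof (rule polydiffeoI[where g="\<lambda>y. y - \<phi> y"])
  show "poly_map (\<lambda>y. y + \<phi> y)" using pm unfolding poly_map_cart
    by (auto intro!: poly_funs.add[of "\<lambda>y. y$i" for i, simplified] pf_coord_cart)
  show "poly_map (\<lambda>y. y - \<phi> y)" using pm unfolding poly_map_cart
    by (auto intro!: pf_minus[of "\<lambda>y. y$i" for i, simplified] pf_coord_cart)
  fix x
  have "\<phi> (x + \<phi> x) = \<phi> x" by (rule dep) (simp add: z)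
  then show "x + \<phi> x - \<phi> (x + \<phi> x) = x" by simp
  have "\<phi> (x - \<phi> x) = \<phi> x" by (rule dep) (simp add: z)
  then show "x - \<phi> x + \<phi> (x - \<phi> x) = x" by simp
qed

definition blk :: "'n \<Rightarrow> 'n \<Rightarrow> real \<Rightarrow> real \<Rightarrow> real \<Rightarrow> real \<Rightarrow> real^'n \<Rightarrow> real^'n" where
  "blk i1 i2 m11 m12 m21 m22 y = (\<chi> j. if j = i1 then m11 * y$i1 + m12 * y$i2
      else if j = i2 then m21 * y$i1 + m22 * y$i2 else y$j)"

lemma poly_map_blk: "poly_map (blk i1 i2 m11 m12 m21 m22)"
  unfolding poly_map_cart blk_def by (auto intro!: pf_intros2)

lemma polydiffeo_blk:
  assumes "i1 \<noteq> i2" "m11 * m22 - m12 * m21 \<noteq> 0"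
  shows "polydiffeo (blk i1 i2 m11 m12 m21 m22)"
proof -
  define d where "d = m11 * m22 - m12 * m21"
  have d: "d \<noteq> 0" using assms d_def by simp
  show ?thesis
  proof (rule polydiffeoI[OF poly_map_blk poly_map_blk, where ?i1.1=i1 and ?i2.1=i2
        and ?m11.1="m22/d" and ?m12.1="-m12/d" and ?m21.1="-m21/d" and ?m22.1="m11/d"])
    fix x
    have e1: "m22 * (m11 * a + m12 * b) / d - m12 * (m21 * a + m22 * b) / d = a" for a b
      using d by (simp add: field_simps) (simp add: d_def algebra_simps)
    have e2: "m11 * (m21 * a + m22 * b) / d - m21 * (m11 * a + m12 * b) / d = b" for a b
      using d by (simp add: field_simps) (simp add: d_def algebra_simps)
    have e3: "m11 * (m22 * a / d - m12 * b / d) + m12 * (m11 * b / d - m21 * a / d) = a" for a b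
      using d by (simp add: field_simps) (simp add: d_def algebra_simps)
    have e4: "m21 * (m22 * a / d - m12 * b / d) + m22 * (m11 * b / d - m21 * a / d) = b" for a b
      using d by (simp add: field_simps) (simp add: d_def algebra_simps)
    show "blk i1 i2 (m22 / d) (- m12 / d) (- m21 / d) (m11 / d) (blk i1 i2 m11 m12 m21 m22 x) = x"
      using assms(1) unfolding blk_def vec_eq_iff by (simp add: e1 e2)
    show "blk i1 i2 m11 m12 m21 m22 (blk i1 i2 (m22 / d) (- m12 / d) (- m21 / d) (m11 / d) x) = x"
      using assms(1) unfolding blk_def vec_eq_iff by (simp add: e3 e4)
  qed
qed

definition aff2 :: "real \<Rightarrow> real \<Rightarrow> real \<Rightarrow> real \<Rightarrow> real \<Rightarrow> real \<Rightarrow> real^2 \<Rightarrow> real^2" where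
  "aff2 c11 c12 c21 c22 d1 d2 z = vector [c11 * z$1 + c12 * z$2 + d1, c21 * z$1 + c22 * z$2 + d2]"

lemma aff2_nth [simp]: "aff2 c11 c12 c21 c22 d1 d2 z $ 1 = c11 * z$1 + c12 * z$2 + d1"
  "aff2 c11 c12 c21 c22 d1 d2 z $ 2 = c21 * z$1 + c22 * z$2 + d2"
  by (simp_all add: aff2_def)

lemma poly_map_aff2: "poly_map (aff2 c11 c12 c21 c22 d1 d2)"
  unfolding poly_map_cart forall_2 by (auto intro!: pf_intros2)

lemma polydiffeo_aff2:
  assumes "c11 * c22 - c12 * c21 \<noteq> 0"
  shows "polydiffeo (aff2 c11 c12 c21 c22 d1 d2)"
proof -
  define d where "d = c11 * c22 - c12 * c21"
  have d: "d \<noteq> 0" using assms d_def by simp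
  show ?thesis
  proof (rule polydiffeoI[OF poly_map_aff2 poly_map_aff2, where ?c11.1="c22/d" and ?c12.1="-c12/d"
        and ?c21.1="-c21/d" and ?c22.1="c11/d" and ?d1.1="-(c22*d1 - c12*d2)/d" and ?d2.1="-(c11*d2-c21*d1)/d"])
    fix x
    show "aff2 (c22 / d) (- c12 / d) (- c21 / d) (c11 / d) (- (c22 * d1 - c12 * d2) / d) (- (c11 * d2 - c21 * d1) / d) (aff2 c11 c12 c21 c22 d1 d2 x) = x"
      using d unfolding vec_eq_iff forall_2 by (simp add: field_simps) (simp add: d_def algebra_simps)
    show "aff2 c11 c12 c21 c22 d1 d2 (aff2 (c22 / d) (- c12 / d) (- c21 / d) (c11 / d) (- (c22 * d1 - c12 * d2) / d) (- (c11 * d2 - c21 * d1) / d) x) = x"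
      using d unfolding vec_eq_iff forall_2 by (simp add: field_simps) (simp add: d_def algebra_simps)
  qed
qed

definition tr :: "'n \<Rightarrow> 'n \<Rightarrow> 'n \<Rightarrow> 'n" where
  "tr a b i = (if i = a then b else if i = b then a else i)"

lemma tr_tr [simp]: "tr a b (tr a b i) = i" by (simp add: tr_def)
lemma tr_eq_iff: "tr a b i = j \<longleftrightarrow> i = tr a b j" by (auto simp: tr_def)

definition sw :: "'n \<Rightarrow> 'n \<Rightarrow> real^'n \<Rightarrow> real^'n" where
  "sw a b y = (\<chi> i. y $ tr a b i)"

lemma polydiffeo_sw: "polydiffeo (sw a b)"
  by (rule polydiffeoI[where g="sw a b"]) (auto simp: poly_map_cart sw_def pf_coord_cart vec_eq_iff)

definition NFg :: "'n \<Rightarrow> 'n \<Rightarrow> 'n \<Rightarrow> (real^2 \<Rightarrow> real) \<Rightarrow> (real^2 \<Rightarrow> real) \<Rightarrow> (real^2 \<Rightarrow> real) \<Rightarrow> real^2 \<Rightarrow> real^'n" where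
  "NFg c1 c2 c3 f1 f2 f3 z = (\<chi> i. if i = c1 then f1 z else if i = c2 then f2 z else if i = c3 then f3 z else 0)"

lemma sw_NFg: "sw a b (NFg c1 c2 c3 f1 f2 f3 z) = NFg (tr a b c1) (tr a b c2) (tr a b c3) f1 f2 f3 z"
  unfolding sw_def NFg_def vec_eq_iff by (auto simp: tr_eq_iff)

lemma peq_NFg_tr: "peq (NFg c1 c2 c3 f1 f2 f3) (NFg (tr a b c1) (tr a b c2) (tr a b c3) f1 f2 f3)"
  by (rule peq_by_left[OF polydiffeo_sw]) (rule sw_NFg)

lemma peq_NFg:
  assumes "c1 \<noteq> c2" "c1 \<noteq> c3" "c2 \<noteq> c3" "e1 \<noteq> e2" "e1 \<noteq> e3" "e2 \<noteq> e3"
  shows "peq (NFg c1 c2 c3 f1 f2 f3) (NFg e1 e2 e3 f1 f2 f3)"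
proof -
  define c2' where "c2' = tr c1 e1 c2"
  define c3' where "c3' = tr c1 e1 c3"
  have s1: "peq (NFg c1 c2 c3 f1 f2 f3) (NFg e1 c2' c3' f1 f2 f3)"
    using peq_NFg_tr[of c1 c2 c3 f1 f2 f3 c1 e1] unfolding c2'_def c3'_def by (simp add: tr_def)
  have d1: "c2' \<noteq> e1" "c3' \<noteq> e1" "c2' \<noteq> c3'" using assms unfolding c2'_def c3'_def tr_def by auto
  define c3'' where "c3'' = tr c2' e2 c3'"
  have s2: "peq (NFg e1 c2' c3' f1 f2 f3) (NFg e1 e2 c3'' f1 f2 f3)"
    using peq_NFg_tr[of e1 c2' c3' f1 f2 f3 c2' e2] d1 assms unfolding c3''_def by (simp add: tr_def)
  have d2: "c3'' \<noteq> e1" "c3'' \<noteq> e2" using assms d1 unfolding c3''_def tr_def by auto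
  have s3: "peq (NFg e1 e2 c3'' f1 f2 f3) (NFg e1 e2 e3 f1 f2 f3)"
    using peq_NFg_tr[of e1 e2 c3'' f1 f2 f3 c3'' e3] d2 assms by (simp add: tr_def)
  show ?thesis using s1 s2 s3 peq_trans by blast
qed

definition Kc :: "real^2^'l \<Rightarrow> real^2^'l \<Rightarrow> 'l \<Rightarrow> real" where "Kc A p i = A$i$1 * (p$i$1)^2 + A$i$2 * (p$i$2)^2"
definition Pc :: "real^2^'l \<Rightarrow> real^2^'l \<Rightarrow> 'l \<Rightarrow> 2 \<Rightarrow> real" where "Pc A p i j = -2 * A$i$j * p$i$j"
definition Dt :: "real^2^'l \<Rightarrow> 'l \<Rightarrow> 'l \<Rightarrow> real" where "Dt A i1 i2 = A$i1$1 * A$i2$2 - A$i1$2 * A$i2$1"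
definition lam :: "real^2^'l \<Rightarrow> 'l \<Rightarrow> 'l \<Rightarrow> 'l \<Rightarrow> real" where "lam A i1 i2 j = (A$j$1 * A$i2$2 - A$j$2 * A$i2$1) / Dt A i1 i2"
definition mu :: "real^2^'l \<Rightarrow> 'l \<Rightarrow> 'l \<Rightarrow> 'l \<Rightarrow> real" where "mu A i1 i2 j = (A$i1$1 * A$j$2 - A$i1$2 * A$j$1) / Dt A i1 i2"
definition alf :: "real^2^'l \<Rightarrow> 'l \<Rightarrow> 'l \<Rightarrow> real^2^'l \<Rightarrow> 'l \<Rightarrow> real" where "alf A i1 i2 p j = Pc A p j 1 - lam A i1 i2 j * Pc A p i1 1 - mu A i1 i2 j * Pc A p i2 1"
definition bet :: "real^2^'l \<Rightarrow> 'l \<Rightarrow> 'l \<Rightarrow> real^2^'l \<Rightarrow> 'l \<Rightarrow> real" where "bet A i1 i2 p j = Pc A p j 2 - lam A i1 i2 j * Pc A p i1 2 - mu A i1 i2 j * Pc A p i2 2"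

lemma G_expand: "G p A x $ i = A$i$1 * (x$1)^2 + A$i$2 * (x$2)^2 + Pc A p i 1 * x$1 + Pc A p i 2 * x$2 + Kc A p i"
  by (simp add: G_def sum_2 Pc_def Kc_def power2_eq_square algebra_simps)

lemma lam_mu:
  assumes "Dt A i1 i2 \<noteq> 0"
  shows "A$j$1 = lam A i1 i2 j * A$i1$1 + mu A i1 i2 j * A$i2$1"
    "A$j$2 = lam A i1 i2 j * A$i1$2 + mu A i1 i2 j * A$i2$2"
  using assms unfolding lam_def mu_def
  by (simp_all add: field_simps) (simp_all add: Dt_def algebra_simps)

lemma prelude:
  fixes A :: "real^2^'l"
  assumes "i1 \<noteq> i2" "Dt A i1 i2 \<noteq> 0"
  shows "\<exists>u1 u2 c1 v1 v2 c2. peq (G p A) (\<lambda>x. \<chi> j. if j = i1 then (x$1)^2 + u1 * x$1 + u2 * x$2 + c1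
     else if j = i2 then (x$2)^2 + v1 * x$1 + v2 * x$2 + c2
     else alf A i1 i2 p j * x$1 + bet A i1 i2 p j * x$2)"
proof -
  define D where "D = Dt A i1 i2"
  have D: "D \<noteq> 0" using assms D_def by simp
  define a1 a2 b1 b2 where "a1 = A$i1$1" and "a2 = A$i1$2" and "b1 = A$i2$1" and "b2 = A$i2$2"
  have Dab: "D = a1 * b2 - a2 * b1" unfolding D_def Dt_def a1_def a2_def b1_def b2_def by simp
  define phi1 :: "real^'l \<Rightarrow> real^'l" where "phi1 y = (\<chi> j. if j = i1 \<or> j = i2 then 0 else
      -(lam A i1 i2 j * y$i1 + mu A i1 i2 j * y$i2 + (Kc A p j - lam A i1 i2 j * Kc A p i1 - mu A i1 i2 j * Kc A p i2)))" for y
  have T1: "polydiffeo (\<lambda>y. y + phi1 y)"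
  proof (rule polydiffeo_shear[where S="-{i1,i2}"])
    show "poly_map phi1" unfolding poly_map_cart phi1_def by (auto intro!: pf_intros2)
    show "\<And>y j. j \<notin> - {i1, i2} \<Longrightarrow> phi1 y $ j = 0" unfolding phi1_def by auto
    fix y y' :: "real^'l" assume a: "\<And>j. j \<notin> - {i1, i2} \<Longrightarrow> y $ j = y' $ j"
    have e: "y$i1 = y'$i1" "y$i2 = y'$i2" using a by auto
    show "phi1 y = phi1 y'" unfolding phi1_def by (simp only: e)
  qed
  define F1 where "F1 x = (\<chi> j. if j = i1 \<or> j = i2 then G p A x $ j else alf A i1 i2 p j * x$1 + bet A i1 i2 p j * x$2)" for x
  have s1: "peq (G p A) F1"
  proof (rule peq_by_left[OF T1])
    fix x
    show "G p A x + phi1 (G p A x) = F1 x"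
      unfolding vec_eq_iff
    proof
      fix j
      show "(G p A x + phi1 (G p A x)) $ j = F1 x $ j"
      proof (cases "j = i1 \<or> j = i2")
        case True then show ?thesis unfolding phi1_def F1_def by auto
      next
        case False
        have e: "A$j$1 = lam A i1 i2 j * A$i1$1 + mu A i1 i2 j * A$i2$1"
          "A$j$2 = lam A i1 i2 j * A$i1$2 + mu A i1 i2 j * A$i2$2"
          using lam_mu[OF assms(2)] by blast+
        show ?thesis using False unfolding phi1_def F1_def alf_def bet_def G_expand
          by (simp add: G_expand e algebra_simps)
      qed
    qed
  qed
  define u1 where "u1 = (b2 * Pc A p i1 1 - a2 * Pc A p i2 1) / D"
  define u2 where "u2 = (b2 * Pc A p i1 2 - a2 * Pc A p i2 2) / D"
  define c1 where "c1 = (b2 * Kc A p i1 - a2 * Kc A p i2) / D"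
  define v1 where "v1 = (- b1 * Pc A p i1 1 + a1 * Pc A p i2 1) / D"
  define v2 where "v2 = (- b1 * Pc A p i1 2 + a1 * Pc A p i2 2) / D"
  define c2 where "c2 = (- b1 * Kc A p i1 + a1 * Kc A p i2) / D"
  have T3: "polydiffeo (blk i1 i2 (b2/D) (-a2/D) (-b1/D) (a1/D))"
  proof (rule polydiffeo_blk[OF assms(1)])
    have "b2 / D * (a1 / D) - - a2 / D * (- b1 / D) = 1 / D" using D
      by (simp add: field_simps power2_eq_square) (simp add: Dab algebra_simps)
    then show "b2 / D * (a1 / D) - - a2 / D * (- b1 / D) \<noteq> 0" using D by simp
  qed
  have s2: "peq F1 (\<lambda>x. \<chi> j. if j = i1 then (x$1)^2 + u1 * x$1 + u2 * x$2 + c1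
     else if j = i2 then (x$2)^2 + v1 * x$1 + v2 * x$2 + c2
     else alf A i1 i2 p j * x$1 + bet A i1 i2 p j * x$2)"
  proof (rule peq_by_left[OF T3])
    fix x
    have g1: "G p A x $ i1 = a1 * (x$1)^2 + a2 * (x$2)^2 + Pc A p i1 1 * x$1 + Pc A p i1 2 * x$2 + Kc A p i1"
      unfolding G_expand a1_def a2_def by simp
    have g2: "G p A x $ i2 = b1 * (x$1)^2 + b2 * (x$2)^2 + Pc A p i2 1 * x$1 + Pc A p i2 2 * x$2 + Kc A p i2"
      unfolding G_expand b1_def b2_def by simp
    have h1: "b2 / D * G p A x $ i1 + - a2 / D * G p A x $ i2 = (x$1)^2 + u1 * x$1 + u2 * x$2 + c1"
      unfolding g1 g2 u1_def u2_def c1_def using D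
      by (simp add: field_simps) (simp add: Dab algebra_simps)
    have h2: "- b1 / D * G p A x $ i1 + a1 / D * G p A x $ i2 = (x$2)^2 + v1 * x$1 + v2 * x$2 + c2"
      unfolding g1 g2 v1_def v2_def c2_def using D
      by (simp add: field_simps) (simp add: Dab algebra_simps)
    show "blk i1 i2 (b2 / D) (- a2 / D) (- b1 / D) (a1 / D) (F1 x) = (\<chi> j. if j = i1 then (x$1)^2 + u1 * x$1 + u2 * x$2 + c1
     else if j = i2 then (x$2)^2 + v1 * x$1 + v2 * x$2 + c2
     else alf A i1 i2 p j * x$1 + bet A i1 i2 p j * x$2)"
      unfolding vec_eq_iff blk_def F1_def using h1 h2 assms(1) by auto
  qed
  show ?thesis using peq_trans[OF s1 s2] by blast
qed

lemma graph:
  fixes F :: "real^2 \<Rightarrow> real^'n"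
  assumes pm: "poly_map F" and kk: "k \<noteq> k'" and c: "c3 \<noteq> k" "c3 \<noteq> k'"
    and Fk: "\<And>z. F z $ k = z$1" and Fk': "\<And>z. F z $ k' = z$2"
  shows "peq F (NFg k k' c3 (\<lambda>z. z$1) (\<lambda>z. z$2) (\<lambda>z. 0))"
proof -
  define N :: "real^2 \<Rightarrow> real^'n" where "N = NFg k k' c3 (\<lambda>z. z$1) (\<lambda>z. z$2) (\<lambda>z. 0)"
  define pr :: "real^'n \<Rightarrow> real^2" where "pr y = vector [y$k, y$k']" for y
  define phi where "phi y = N (pr y) - F (pr y)" for y
  have pmpr: "poly_map pr" unfolding poly_map_cart forall_2 pr_def by (simp add: pf_coord_cart)
  have pmN: "poly_map N" unfolding poly_map_cart N_def NFg_def by (auto intro!: pf_intros2)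
  have a1: "poly_map (\<lambda>y. N (pr y))" "poly_map (\<lambda>y. F (pr y))" using poly_map_comp pmpr pmN pm by blast+
  have pmphi: "poly_map phi" using a1 unfolding poly_map_cart phi_def by (auto intro!: pf_minus)
  have Nk: "N z $ k = z$1" "N z $ k' = z$2" for z unfolding N_def NFg_def using kk by auto
  have T: "polydiffeo (\<lambda>y. y + phi y)"
  proof (rule polydiffeo_shear[where S="-{k,k'}", OF pmphi])
    show "\<And>y j. j \<notin> - {k, k'} \<Longrightarrow> phi y $ j = 0" unfolding phi_def using Nk Fk Fk' by auto
    fix y y' :: "real^'n" assume a: "\<And>j. j \<notin> - {k, k'} \<Longrightarrow> y $ j = y' $ j"
    have e: "pr y = pr y'" unfolding pr_def using a by auto
    show "phi y = phi y'" unfolding phi_def by (simp only: e)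
  qed
  have prF: "pr (F z) = z" for z unfolding pr_def vec_eq_iff forall_2 using Fk Fk' by simp
  have "peq F N"
    by (rule peq_by_left[OF T]) (simp add: phi_def prF)
  then show ?thesis unfolding N_def .
qed

lemma core4:
  fixes al be :: "'n::finite \<Rightarrow> real" and Q1 Q2 :: "real^2 \<Rightarrow> real"
  assumes Q: "Q1 \<in> poly_funs" "Q2 \<in> poly_funs"
    and d: "i1 \<noteq> i2" "i1 \<noteq> k" "i1 \<noteq> k'" "i2 \<noteq> k" "i2 \<noteq> k'" "k \<noteq> k'"
    and E: "al k * be k' - be k * al k' \<noteq> 0"
  shows "peq (\<lambda>x. \<chi> j. if j = i1 then Q1 x else if j = i2 then Q2 x else al j * x$1 + be j * x$2)
             (NFg k k' i1 (\<lambda>z. z$1) (\<lambda>z. z$2) (\<lambda>z. 0))"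
proof -
  define Ev where "Ev = al k * be k' - be k * al k'"
  have Ev: "Ev \<noteq> 0" using E Ev_def by simp
  define F :: "real^2 \<Rightarrow> real^'n" where "F x = (\<chi> j. if j = i1 then Q1 x else if j = i2 then Q2 x else al j * x$1 + be j * x$2)" for x
  define psi where "psi = aff2 (be k'/Ev) (-be k/Ev) (-al k'/Ev) (al k/Ev) 0 0"
  have pp: "polydiffeo psi" unfolding psi_def
  proof (rule polydiffeo_aff2)
    have "be k' / Ev * (al k / Ev) - - be k / Ev * (- al k' / Ev) = 1 / Ev"
      using Ev by (simp add: field_simps power2_eq_square) (simp add: Ev_def algebra_simps)
    then show "be k' / Ev * (al k / Ev) - - be k / Ev * (- al k' / Ev) \<noteq> 0" using Ev by simp
  qed
  have pmF: "poly_map F" unfolding poly_map_cart F_def using Q by (auto intro!: pf_intros2)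
  have pmFp: "poly_map (\<lambda>z. F (psi z))" using poly_map_comp pmF pp unfolding polydiffeo_def by blast
  have k1: "F (psi z) $ k = z$1" for z
    using d Ev unfolding F_def psi_def by (simp add: field_simps) (simp add: Ev_def algebra_simps)
  have k2: "F (psi z) $ k' = z$2" for z
    using d Ev unfolding F_def psi_def by (simp add: field_simps) (simp add: Ev_def algebra_simps)
  have g: "peq (\<lambda>z. F (psi z)) (NFg k k' i1 (\<lambda>z. z$1) (\<lambda>z. z$2) (\<lambda>z. 0))"
    by (rule graph[OF pmFp d(6)]) (use d k1 k2 in auto)
  have "peq F (\<lambda>z. F (psi z))" using peq_sym[OF peq_right[OF pp]] .
  from peq_trans[OF this g] show ?thesis unfolding F_def .
qed

lemma rank_minor:
  fixes A :: "real^2^'l"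
  assumes nz: "\<forall>i j. A$i$j \<noteq> 0" and r: "rank A = 2"
  shows "\<exists>i1 i2. Dt A i1 i2 \<noteq> 0"
proof (rule ccontr)
  assume "\<not> ?thesis" then have z: "\<And>i1 i2. Dt A i1 i2 = 0" by blast
  obtain i0 :: 'l where True by blast
  have "rows A \<subseteq> span {A$i0}"
  proof
    fix r assume "r \<in> rows A"
    then obtain i where ri: "r = row i A" by (auto simp: rows_def)
    have n0: "A$i0$1 \<noteq> 0" using nz by blast
    have "A$i0$1 * A$i$2 - A$i0$2 * A$i$1 = 0" using z[of i0 i] unfolding Dt_def .
    then have "A$i$2 = A$i$1 / A$i0$1 * A$i0$2" using n0 by (simp add: field_simps)
    then have "row i A = (A$i$1 / A$i0$1) *\<^sub>R A$i0"
      unfolding vec_eq_iff forall_2 row_def using n0 by simp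
    then show "r \<in> span {A$i0}" unfolding ri by (simp add: span_base span_mul)
  qed
  then have "dim (rows A) \<le> card {A$i0}" by (rule dim_le_card) simp
  then have "rank A \<le> 1" using row_rank_def[of A] by simp
  with r show False by simp
qed

lemma core3:
  fixes u1 u2 c1 v1 v2 c2 al be :: real and i1 i2 k :: "'n::finite"
  assumes d: "i1 \<noteq> i2" "i1 \<noteq> k" "i2 \<noteq> k" and U: "(UNIV::'n set) = {i1,i2,k}"
    and ab: "al \<noteq> 0" "be \<noteq> 0"
  shows "peq (\<lambda>x::real^2. (\<chi> j. if j = i1 then (x$1)^2 + u1 * x$1 + u2 * x$2 + c1
      else if j = i2 then (x$2)^2 + v1 * x$1 + v2 * x$2 + c2 else al * x$1 + be * x$2) :: real^'n)
    (NFg k i2 i1 (\<lambda>z. z$1) (\<lambda>z. (z$2)^2) (\<lambda>z. z$1 * z$2))"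
proof -
  define ta where "ta = (u2*al/be - u1)/2"
  define tb where "tb = (v1*be/al - v2)/2"
  have hs1: "2*ta + u1 = u2*al/be" unfolding ta_def by (simp add: field_simps)
  have hs2: "2*tb + v2 = v1*be/al" unfolding tb_def by (simp add: field_simps)
  define ga where "ga = al*ta + be*tb"
  define E1 where "E1 = ta^2 + u1*ta + u2*tb + c1"
  define E2 where "E2 = tb^2 + v1*ta + v2*tb + c2"
  define psi where "psi = aff2 (1/(2*al)) (1/(2*al)) (1/(2*be)) (-1/(2*be)) ta tb"
  define F2 :: "real^2 \<Rightarrow> real^'n" where "F2 z = (\<chi> j. if j = i1 then (z$1+z$2)^2/(4*al^2) + (u2/be)*z$1 + E1
     else if j = i2 then (z$1-z$2)^2/(4*be^2) + (v1/al)*z$1 + E2 else z$1 + ga)" for z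
  have pp: "polydiffeo psi" unfolding psi_def
  proof (rule polydiffeo_aff2)
    have "1 / (2 * al) * (- 1 / (2 * be)) - 1 / (2 * al) * (1 / (2 * be)) = -1/(2*al*be)"
      using ab by (simp add: field_simps)
    then show "1 / (2 * al) * (- 1 / (2 * be)) - 1 / (2 * al) * (1 / (2 * be)) \<noteq> 0" using ab by simp
  qed
  have q1: "(w1+ta)^2 + u1*(w1+ta) + u2*(w2+tb) + c1 = w1^2 + (u2/be)*(al*w1+be*w2) + E1" for w1 w2
  proof -
    have "(w1+ta)^2 + u1*(w1+ta) + u2*(w2+tb) + c1 = w1^2 + (2*ta+u1)*w1 + u2*w2 + E1"
      by (simp add: E1_def power2_eq_square algebra_simps)
    also have "\<dots> = w1^2 + (u2/be)*(al*w1+be*w2) + E1" unfolding hs1 using ab by (simp add: field_simps)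
    finally show ?thesis .
  qed
  have q2: "(w2+tb)^2 + v1*(w1+ta) + v2*(w2+tb) + c2 = w2^2 + (v1/al)*(al*w1+be*w2) + E2" for w1 w2
  proof -
    have "(w2+tb)^2 + v1*(w1+ta) + v2*(w2+tb) + c2 = w2^2 + (2*tb+v2)*w2 + v1*w1 + E2"
      by (simp add: E2_def power2_eq_square algebra_simps)
    also have "\<dots> = w2^2 + (v1/al)*(al*w1+be*w2) + E2" unfolding hs2 using ab by (simp add: field_simps)
    finally show ?thesis .
  qed
  have q3: "al*(w1+ta) + be*(w2+tb) = (al*w1+be*w2) + ga" for w1 w2 unfolding ga_def by (simp add: algebra_simps)
  have st0: "peq (\<lambda>x::real^2. (\<chi> j. if j = i1 then (x$1)^2 + u1 * x$1 + u2 * x$2 + c1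
      else if j = i2 then (x$2)^2 + v1 * x$1 + v2 * x$2 + c2 else al * x$1 + be * x$2) :: real^'n) F2"
  proof (rule peq_by_right[OF pp])
    fix z :: "real^2"
    define w1 where "w1 = (z$1+z$2)/(2*al)"
    define w2 where "w2 = (z$1-z$2)/(2*be)"
    have p1: "psi z $ 1 = w1 + ta" unfolding psi_def w1_def by (simp add: add_divide_distrib)
    have p2: "psi z $ 2 = w2 + tb" unfolding psi_def w2_def by (simp add: diff_divide_distrib)
    have l: "al*w1+be*w2 = z$1" unfolding w1_def w2_def using ab by (simp add: field_simps)
    have w1s: "w1^2 = (z$1+z$2)^2/(4*al^2)" unfolding w1_def by (simp add: power_divide power_mult_distrib)
    have w2s: "w2^2 = (z$1-z$2)^2/(4*be^2)" unfolding w2_def by (simp add: power_divide power_mult_distrib)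
    show "(\<chi> j. if j = i1 then (psi z$1)^2 + u1 * psi z$1 + u2 * psi z$2 + c1
      else if j = i2 then (psi z$2)^2 + v1 * psi z$1 + v2 * psi z$2 + c2 else al * psi z$1 + be * psi z$2) = F2 z"
      unfolding p1 p2 F2_def q1 q2 q3 l w1s w2s ..
  qed
  define F3 :: "real^2 \<Rightarrow> real^'n" where "F3 z = (\<chi> j. if j = i1 then (z$1+z$2)^2/(4*al^2) + (u2/be)*z$1 + E1
     else if j = i2 then (z$1-z$2)^2/(4*be^2) + (v1/al)*z$1 + E2 else z$1)" for z
  define ph1 :: "real^'n \<Rightarrow> real^'n" where "ph1 y = (\<chi> j. if j = i1 \<or> j = i2 then 0 else -ga)" for y
  have st1: "peq F2 F3"
  proof (rule peq_by_left)
    show "polydiffeo (\<lambda>y. y + ph1 y)"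
      by (rule polydiffeo_shear[where S="-{i1,i2}"]) (auto simp: ph1_def poly_map_cart intro!: pf_intros2)
    show "F2 z + ph1 (F2 z) = F3 z" for z unfolding F2_def F3_def ph1_def vec_eq_iff by auto
  qed
  define F4 :: "real^2 \<Rightarrow> real^'n" where "F4 z = (\<chi> j. if j = i1 then (z$1+z$2)^2/(4*al^2)
     else if j = i2 then (z$1-z$2)^2/(4*be^2) else z$1)" for z
  define ph2 :: "real^'n \<Rightarrow> real^'n" where "ph2 y = (\<chi> j. if j = i1 then -((u2/be)*y$k + E1)
     else if j = i2 then -((v1/al)*y$k + E2) else 0)" for y
  have st2: "peq F3 F4"
  proof (rule peq_by_left)
    show "polydiffeo (\<lambda>y. y + ph2 y)"
    proof (rule polydiffeo_shear[where S="{i1,i2}"])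
      show "poly_map ph2" unfolding ph2_def poly_map_cart by (auto intro!: pf_intros2)
      show "\<And>y j. j \<notin> {i1, i2} \<Longrightarrow> ph2 y $ j = 0" unfolding ph2_def by auto
      fix y y' :: "real^'n" assume a: "\<And>j. j \<notin> {i1, i2} \<Longrightarrow> y $ j = y' $ j"
      have e: "y$k = y'$k" using a d by auto
      show "ph2 y = ph2 y'" unfolding ph2_def by (simp only: e)
    qed
    show "F3 z + ph2 (F3 z) = F4 z" for z unfolding F3_def F4_def ph2_def vec_eq_iff using d by auto
  qed
  define F5 :: "real^2 \<Rightarrow> real^'n" where "F5 z = (\<chi> j. if j = i1 then z$1 * z$2
     else if j = i2 then (z$1)^2 + (z$2)^2 else z$1)" for z
  have st3: "peq F4 F5"
  proof (rule peq_by_left)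
    show "polydiffeo (blk i1 i2 (al^2) (-(be^2)) (2*al^2) (2*be^2))"
    proof (rule polydiffeo_blk[OF d(1)])
      have "al\<^sup>2 * (2 * be\<^sup>2) - - (be\<^sup>2) * (2 * al\<^sup>2) = 4 * al^2 * be^2" by simp
      then show "al\<^sup>2 * (2 * be\<^sup>2) - - (be\<^sup>2) * (2 * al\<^sup>2) \<noteq> 0" using ab by simp
    qed
    fix z :: "real^2"
    have b1: "al^2 * ((z$1+z$2)^2/(4*al^2)) + - (be^2) * ((z$1-z$2)^2/(4*be^2)) = z$1 * z$2"
      using ab by (simp add: field_simps power2_eq_square)
    have b2: "2*al^2 * ((z$1+z$2)^2/(4*al^2)) + 2*be^2 * ((z$1-z$2)^2/(4*be^2)) = (z$1)^2 + (z$2)^2"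
      using ab by (simp add: field_simps power2_eq_square)
    show "blk i1 i2 (al^2) (-(be^2)) (2*al^2) (2*be^2) (F4 z) = F5 z"
      unfolding blk_def F4_def F5_def vec_eq_iff using d b1 b2 by auto
  qed
  define F6 :: "real^2 \<Rightarrow> real^'n" where "F6 z = (\<chi> j. if j = i1 then z$1 * z$2
     else if j = i2 then (z$2)^2 else z$1)" for z
  define ph3 :: "real^'n \<Rightarrow> real^'n" where "ph3 y = (\<chi> j. if j = i2 then -((y$k)^2) else 0)" for y
  have st4: "peq F5 F6"
  proof (rule peq_by_left)
    show "polydiffeo (\<lambda>y. y + ph3 y)"
    proof (rule polydiffeo_shear[where S="{i2}"])
      show "poly_map ph3" unfolding ph3_def poly_map_cart by (auto intro!: pf_intros2)
      show "\<And>y j. j \<notin> {i2} \<Longrightarrow> ph3 y $ j = 0" unfolding ph3_def by auto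
      fix y y' :: "real^'n" assume a: "\<And>j. j \<notin> {i2} \<Longrightarrow> y $ j = y' $ j"
      have e: "y$k = y'$k" using a d by auto
      show "ph3 y = ph3 y'" unfolding ph3_def by (simp only: e)
    qed
    show "F5 z + ph3 (F5 z) = F6 z" for z unfolding F5_def F6_def ph3_def vec_eq_iff using d by auto
  qed
  have "F6 = NFg k i2 i1 (\<lambda>z. z$1) (\<lambda>z. (z$2)^2) (\<lambda>z. z$1 * z$2)"
  proof (rule ext)
    fix z :: "real^2"
    show "F6 z = NFg k i2 i1 (\<lambda>z. z$1) (\<lambda>z. (z$2)^2) (\<lambda>z. z$1 * z$2) z"
      unfolding F6_def NFg_def vec_eq_iff
    proof
      fix j :: 'n
      have "j \<in> {i1,i2,k}" using U by blast
      then show "(\<chi> j. if j = i1 then z$1 * z$2 else if j = i2 then (z$2)^2 else z$1) $ j =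
        (\<chi> i. if i = k then z$1 else if i = i2 then (z$2)^2 else if i = i1 then z$1 * z$2 else 0) $ j"
        using d by auto
    qed
  qed
  then show ?thesis using peq_trans[OF st0 peq_trans[OF st1 peq_trans[OF st2 peq_trans[OF st3 st4]]]] by simp
qed

definition NFsel :: "'l::finite \<Rightarrow> 'l \<Rightarrow> 'l \<Rightarrow> real^2 \<Rightarrow> real^'l" where
  "NFsel e1 e2 e3 = (if CARD('l) = 3 then NFg e1 e2 e3 (\<lambda>z. z$1) (\<lambda>z. (z$2)^2) (\<lambda>z. z$1 * z$2)
      else NFg e1 e2 e3 (\<lambda>z. z$1) (\<lambda>z. z$2) (\<lambda>z. 0))"

lemma exists_other:
  assumes "card (S::'l::finite set) < CARD('l)"
  obtains k where "k \<notin> S"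
proof -
  have "\<not> UNIV \<subseteq> S"
  proof
    assume "UNIV \<subseteq> S"
    then have "CARD('l) \<le> card S" by (simp add: card_mono)
    with assms show False by simp
  qed
  then show ?thesis using that by blast
qed

lemma main_A:
  fixes A :: "real^2^'l::finite"
  assumes c3: "CARD('l) \<ge> 3" and nz: "\<forall>i j. A$i$j \<noteq> 0" and r: "rank A = 2"
    and e: "e1 \<noteq> e2" "e1 \<noteq> e3" "e2 \<noteq> e3"
  shows "\<exists>f. f \<in> poly_funs \<and> (\<exists>p. f p \<noteq> 0) \<and> (\<forall>p. f p \<noteq> 0 \<longrightarrow> peq (G p A) (NFsel e1 e2 e3))"
proof -
  obtain i1 i2 where D: "Dt A i1 i2 \<noteq> 0" using rank_minor[OF nz r] by blast
  have d12: "i1 \<noteq> i2" using D unfolding Dt_def by auto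
  have "card {i1,i2} < CARD('l)" using c3 by (simp add: card_insert_if)
  then obtain k where k: "k \<notin> {i1,i2}" by (rule exists_other)
  have kk: "i1 \<noteq> k" "i2 \<noteq> k" using k by auto
  show ?thesis
  proof (cases "CARD('l) = 3")
    case True
    have U: "(UNIV::'l set) = {i1,i2,k}"
    proof (rule card_subset_eq[symmetric])
      show "card {i1,i2,k} = card (UNIV::'l set)" using True d12 k by (auto simp: card_insert_if)
    qed auto
    define f where "f p = alf A i1 i2 p k * bet A i1 i2 p k" for p
    have pf: "f \<in> poly_funs" unfolding f_def alf_def bet_def Pc_def by (auto intro!: pf_intros2)
    define p0 :: "real^2^'l" where "p0 = (\<chi> i. if i = k then vector [1,1] else 0)"
    have "f p0 = (-2 * A$k$1) * (-2 * A$k$2)" using kk unfolding f_def alf_def bet_def Pc_def p0_def by simp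
    then have w: "f p0 \<noteq> 0" using nz by simp
    have "peq (G p A) (NFsel e1 e2 e3)" if fp: "f p \<noteq> 0" for p
    proof -
      obtain u1 u2 c1 v1 v2 c2 where pr: "peq (G p A) (\<lambda>x. \<chi> j. if j = i1 then (x$1)^2 + u1 * x$1 + u2 * x$2 + c1
          else if j = i2 then (x$2)^2 + v1 * x$1 + v2 * x$2 + c2
          else alf A i1 i2 p j * x$1 + bet A i1 i2 p j * x$2)"
        using prelude[OF d12 D, of p] by blast
      have ab: "alf A i1 i2 p k \<noteq> 0" "bet A i1 i2 p k \<noteq> 0" using fp unfolding f_def by auto
      have eqf: "(\<lambda>x::real^2. (\<chi> j. if j = i1 then (x$1)^2 + u1 * x$1 + u2 * x$2 + c1
          else if j = i2 then (x$2)^2 + v1 * x$1 + v2 * x$2 + c2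
          else alf A i1 i2 p j * x$1 + bet A i1 i2 p j * x$2) :: real^'l) =
        (\<lambda>x. \<chi> j. if j = i1 then (x$1)^2 + u1 * x$1 + u2 * x$2 + c1
          else if j = i2 then (x$2)^2 + v1 * x$1 + v2 * x$2 + c2
          else alf A i1 i2 p k * x$1 + bet A i1 i2 p k * x$2)"
      proof (rule ext)
        fix x :: "real^2"
        show "(\<chi> j. if j = i1 then (x$1)^2 + u1 * x$1 + u2 * x$2 + c1
          else if j = i2 then (x$2)^2 + v1 * x$1 + v2 * x$2 + c2
          else alf A i1 i2 p j * x$1 + bet A i1 i2 p j * x$2) =
          (\<chi> j. if j = i1 then (x$1)^2 + u1 * x$1 + u2 * x$2 + c1
          else if j = i2 then (x$2)^2 + v1 * x$1 + v2 * x$2 + c2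
          else alf A i1 i2 p k * x$1 + bet A i1 i2 p k * x$2)"
          unfolding vec_eq_iff
        proof
          fix j :: 'l
          have "j \<in> {i1,i2,k}" using U by blast
          then show "(\<chi> j. if j = i1 then (x$1)^2 + u1 * x$1 + u2 * x$2 + c1
          else if j = i2 then (x$2)^2 + v1 * x$1 + v2 * x$2 + c2
          else alf A i1 i2 p j * x$1 + bet A i1 i2 p j * x$2) $ j =
          (\<chi> j. if j = i1 then (x$1)^2 + u1 * x$1 + u2 * x$2 + c1
          else if j = i2 then (x$2)^2 + v1 * x$1 + v2 * x$2 + c2
          else alf A i1 i2 p k * x$1 + bet A i1 i2 p k * x$2) $ j" by auto
        qed
      qed
      have c: "peq (G p A) (NFg k i2 i1 (\<lambda>z. z$1) (\<lambda>z. (z$2)^2) (\<lambda>z. z$1 * z$2))"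
        using peq_trans[OF pr[unfolded eqf] core3[OF d12 _ _ U ab]] k by auto
      have "peq (NFg k i2 i1 (\<lambda>z. z$1) (\<lambda>z. (z$2)^2) (\<lambda>z. z$1 * z$2))
                (NFg e1 e2 e3 (\<lambda>z. z$1) (\<lambda>z. (z$2)^2) (\<lambda>z. z$1 * z$2))"
        by (rule peq_NFg) (use k d12 e in auto)
      from peq_trans[OF c this] show ?thesis unfolding NFsel_def using True by simp
    qed
    then show ?thesis using pf w by blast
  next
    case False
    then have c4: "CARD('l) \<ge> 4" using c3 by simp
    have "card {i1,i2,k} < CARD('l)" using c4 by (simp add: card_insert_if)
    then obtain k' where k': "k' \<notin> {i1,i2,k}" by (rule exists_other)
    have kk': "i1 \<noteq> k'" "i2 \<noteq> k'" "k \<noteq> k'" using k' by auto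
    define f where "f p = alf A i1 i2 p k * bet A i1 i2 p k' - bet A i1 i2 p k * alf A i1 i2 p k'" for p
    have pf: "f \<in> poly_funs" unfolding f_def alf_def bet_def Pc_def by (auto intro!: pf_intros2)
    define p0 :: "real^2^'l" where "p0 = (\<chi> i. if i = k then vector [1,0] else if i = k' then vector [0,1] else 0)"
    have "f p0 = (-2 * A$k$1) * (-2 * A$k'$2)" using kk kk' unfolding f_def alf_def bet_def Pc_def p0_def by simp
    then have w: "f p0 \<noteq> 0" using nz by simp
    have "peq (G p A) (NFsel e1 e2 e3)" if fp: "f p \<noteq> 0" for p
    proof -
      obtain u1 u2 c1 v1 v2 c2 where pr: "peq (G p A) (\<lambda>x. \<chi> j. if j = i1 then (x$1)^2 + u1 * x$1 + u2 * x$2 + c1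
          else if j = i2 then (x$2)^2 + v1 * x$1 + v2 * x$2 + c2
          else alf A i1 i2 p j * x$1 + bet A i1 i2 p j * x$2)"
        using prelude[OF d12 D, of p] by blast
      have Q: "(\<lambda>x::real^2. (x$1)^2 + u1 * x$1 + u2 * x$2 + c1) \<in> poly_funs"
        "(\<lambda>x::real^2. (x$2)^2 + v1 * x$1 + v2 * x$2 + c2) \<in> poly_funs" by (auto intro!: pf_intros2)
      have dd: "i1 \<noteq> k" "i1 \<noteq> k'" "i2 \<noteq> k" "i2 \<noteq> k'" "k \<noteq> k'" using k k' by auto
      have c: "peq (G p A) (NFg k k' i1 (\<lambda>z. z$1) (\<lambda>z. z$2) (\<lambda>z. 0))"
        using peq_trans[OF pr core4[OF Q d12 dd, of "alf A i1 i2 p" "bet A i1 i2 p"]] fp unfolding f_def by simp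
      have "peq (NFg k k' i1 (\<lambda>z. z$1) (\<lambda>z. z$2) (\<lambda>z. 0))
                (NFg e1 e2 e3 (\<lambda>z. z$1) (\<lambda>z. z$2) (\<lambda>z. 0))"
        by (rule peq_NFg) (use k k' d12 e in auto)
      from peq_trans[OF c this] show ?thesis unfolding NFsel_def using False by simp
    qed
    then show ?thesis using pf w by blast
  qed
qed

theorem corollary2p1:
  fixes A B :: "real^2^'l::finite"
  assumes "CARD('l) \<ge> 3"
    and "\<forall>i j. A$i$j \<noteq> 0" and "\<forall>i j. B$i$j \<noteq> 0"
    and "rank A = 2" and "rank B = 2"
  shows "\<exists>\<Sigma>A \<Sigma>B :: (real^2^'l) set.
           proper_algebraic_set \<Sigma>A \<and> proper_algebraic_set \<Sigma>B \<and>
           (\<forall>p q. p \<notin> \<Sigma>A \<and> q \<notin> \<Sigma>B \<longrightarrow> A_equivalent (G p A) (G q B))"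
proof -
  obtain T :: "'l set" where T: "card T = 3" using obtain_subset_with_card_n[of 3 "UNIV::'l set"] assms(1) by blast
  then obtain e1 e2 e3 :: 'l where e: "e1 \<noteq> e2" "e2 \<noteq> e3" "e1 \<noteq> e3" unfolding card_3_iff by blast
  obtain fA where fA: "fA \<in> poly_funs" "\<exists>p. fA p \<noteq> 0" "\<forall>p. fA p \<noteq> 0 \<longrightarrow> peq (G p A) (NFsel e1 e2 e3)"
    using main_A[OF assms(1,2,4), of e1 e2 e3] e by blast
  obtain fB where fB: "fB \<in> poly_funs" "\<exists>p. fB p \<noteq> 0" "\<forall>p. fB p \<noteq> 0 \<longrightarrow> peq (G p B) (NFsel e1 e2 e3)"
    using main_A[OF assms(1,3,5), of e1 e2 e3] e by blast
  have pa: "proper_algebraic_set {p. fA p = 0}"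
    unfolding proper_algebraic_set_def algebraic_set_def
  proof
    show "\<exists>F. finite F \<and> F \<subseteq> poly_funs \<and> {p. fA p = 0} = {x. \<forall>f\<in>F. f x = 0}"
      by (rule exI[of _ "{fA}"]) (use fA in auto)
    show "{p. fA p = 0} \<noteq> UNIV" using fA(2) by auto
  qed
  have pb: "proper_algebraic_set {p. fB p = 0}"
    unfolding proper_algebraic_set_def algebraic_set_def
  proof
    show "\<exists>F. finite F \<and> F \<subseteq> poly_funs \<and> {p. fB p = 0} = {x. \<forall>f\<in>F. f x = 0}"
      by (rule exI[of _ "{fB}"]) (use fB in auto)
    show "{p. fB p = 0} \<noteq> UNIV" using fB(2) by auto
  qed
  have "\<forall>p q. p \<notin> {p. fA p = 0} \<and> q \<notin> {p. fB p = 0} \<longrightarrow> A_equivalent (G p A) (G q B)"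
  proof (intro allI impI)
    fix p q assume "p \<notin> {p. fA p = 0} \<and> q \<notin> {p. fB p = 0}"
    then have "peq (G p A) (NFsel e1 e2 e3)" "peq (G q B) (NFsel e1 e2 e3)" using fA fB by auto
    then show "A_equivalent (G p A) (G q B)" using peq_A_equivalent peq_trans peq_sym by blast
  qed
  then show ?thesis using pa pb by blast
qed

end
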